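(* Let $G$ be a finite group acting (via a homomorphism $\Gamma_G: G \to S_A$) on a finite set $A = X \sqcup Y$ of cardinality $n$, and suppose the action is partition-preserving. Let $\Omega = \Omega_X \sqcup \Omega_Y$ be a set of colors, with weight functions $\omega_X:\Omega_X\to\mathbb{N}^+$ and $\omega_Y:\Omega_Y\to\mathbb{N}^+$ having only finitely many colors of each weight, and let $f_X$, $f_Y$ be their generating functions. Let $\Phi$ be the set of valid colorings of $A$, on which $G$ acts by $(g\varphi)(a)=\varphi(ga)$. Then, as formal power series in two variables, $$\sum_{a,b\ge 0} N_{a,b}\, x^a y^b = \tilde Z_G\big(f_X(x),\ldots,f_X(x^n), f_Y(y),\ldots, f_Y(y^n)\big),$$ where $N_{a,b}$ is the number of orbits of $G$ on $\Phi$ consisting of colorings $\varphi$ with $\sum_{c\in X}\omega_X(\varphi(c)) = a$ and $\sum_{c\in Y}\omega_Y(\varphi(c)) = b$.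
   Context: For a finite set $A$, $S_A$ is the group of bijections $A\to A$; every element of $S_A$ decomposes uniquely (up to order) into pairwise disjoint cycles. An action of $G$ on $A = X\sqcup Y$ is partition-preserving if for all $g\in G$ and $a\in A$: $ga\in X \iff a\in X$ and $ga\in Y\iff a\in Y$. For $g\in G$, $C_k^X(g)$ (resp. $C_k^Y(g)$) denotes the number of $k$-cycles (fixed points counting as 1-cycles) in the disjoint cycle decomposition of $\Gamma_G(g)$ contained in $X$ (resp. $Y$). The bipartite cycle index is $$\tilde Z_G(x_1,\ldots,x_n,y_1,\ldots,y_n) = \frac{1}{|G|}\sum_{g\in G} x_1^{C_1^X(g)}\cdots x_n^{C_n^X(g)}\, y_1^{C_1^Y(g)}\cdots y_n^{C_n^Y(g)}.$$ For a weight function $\omega:\Omega'\to\mathbb{N}$ with finite fibers, its generating function is $f_\omega(x)=\sum_{i\ge 0}|\omega^{-1}(i)|\,x^i$. A coloring $\varphi: A\to\Omega_X\sqcup\Omega_Y$ is valid if $\varphi(c)\in\Omega_X\iff c\in X$ and $\varphi(c)\in\Omega_Y\iff c\in Y$. *)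

theory Defs
  imports "HOL-Algebra.Group_Action" "HOL-Computational_Algebra.Formal_Power_Series" "HOL-Library.FuncSet"
begin

definition perm_cycle :: "('a \<Rightarrow> 'a) \<Rightarrow> 'a \<Rightarrow> 'a set" where
  "perm_cycle p a = {(p ^^ i) a | i. True}"

definition cycles_in :: "('a \<Rightarrow> 'a) \<Rightarrow> 'a set \<Rightarrow> nat \<Rightarrow> nat" where
  "cycles_in p S k = card {perm_cycle p a | a. a \<in> S \<and> perm_cycle p a \<subseteq> S \<and> card (perm_cycle p a) = k}"

text \<open>Bipartite cycle index, evaluated in the two-variable power series ring
  Q[[x]][[y]] (outer variable y, inner variable x).\<close>
definition bip_cycle_index ::
  "('g, 'm) monoid_scheme \<Rightarrow> ('g \<Rightarrow> 'a \<Rightarrow> 'a) \<Rightarrow> 'a set \<Rightarrow> 'a set \<Rightarrow> nat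
    \<Rightarrow> (nat \<Rightarrow> rat fps fps) \<Rightarrow> (nat \<Rightarrow> rat fps fps) \<Rightarrow> rat fps fps" where
  "bip_cycle_index G \<Gamma> X Y n xs ys =
     fps_const (fps_const (1 / of_nat (card (carrier G)))) *
     (\<Sum>g\<in>carrier G. \<Prod>k\<in>{1..n}. xs k ^ cycles_in (\<Gamma> g) X k * ys k ^ cycles_in (\<Gamma> g) Y k)"

definition gen_fun :: "'c set \<Rightarrow> ('c \<Rightarrow> nat) \<Rightarrow> rat fps" where
  "gen_fun \<Omega> \<omega> = Abs_fps (\<lambda>i. of_nat (card {c \<in> \<Omega>. \<omega> c = i}))"

definition valid_colorings :: "'a set \<Rightarrow> 'a set \<Rightarrow> 'a set \<Rightarrow> 'c set \<Rightarrow> 'c set \<Rightarrow> ('a \<Rightarrow> 'c) set" where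
  "valid_colorings A X Y \<Omega>X \<Omega>Y =
     {\<phi> \<in> A \<rightarrow>\<^sub>E (\<Omega>X \<union> \<Omega>Y). \<forall>c\<in>A. (\<phi> c \<in> \<Omega>X \<longleftrightarrow> c \<in> X) \<and> (\<phi> c \<in> \<Omega>Y \<longleftrightarrow> c \<in> Y)}"

definition act_col :: "('g \<Rightarrow> 'a \<Rightarrow> 'a) \<Rightarrow> 'a set \<Rightarrow> 'g \<Rightarrow> ('a \<Rightarrow> 'c) \<Rightarrow> ('a \<Rightarrow> 'c)" where
  "act_col \<Gamma> A g \<phi> = (\<lambda>a\<in>A. \<phi> (\<Gamma> g a))"

definition col_orbits :: "('g, 'm) monoid_scheme \<Rightarrow> ('g \<Rightarrow> 'a \<Rightarrow> 'a) \<Rightarrow> 'a set \<Rightarrow> ('a \<Rightarrow> 'c) set \<Rightarrow> ('a \<Rightarrow> 'c) set set" where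
  "col_orbits G \<Gamma> A \<Phi> = {{act_col \<Gamma> A g \<phi> | g. g \<in> carrier G} | \<phi>. \<phi> \<in> \<Phi>}"

definition N_orbits ::
  "('g, 'm) monoid_scheme \<Rightarrow> ('g \<Rightarrow> 'a \<Rightarrow> 'a) \<Rightarrow> 'a set \<Rightarrow> 'a set \<Rightarrow> 'a set
   \<Rightarrow> 'c set \<Rightarrow> 'c set \<Rightarrow> ('c \<Rightarrow> nat) \<Rightarrow> ('c \<Rightarrow> nat) \<Rightarrow> nat \<Rightarrow> nat \<Rightarrow> nat" where
  "N_orbits G \<Gamma> A X Y \<Omega>X \<Omega>Y \<omega>X \<omega>Y a b =
     card {Orb \<in> col_orbits G \<Gamma> A (valid_colorings A X Y \<Omega>X \<Omega>Y).
            \<forall>\<phi>\<in>Orb. (\<Sum>c\<in>X. \<omega>X (\<phi> c)) = a \<and> (\<Sum>c\<in>Y. \<omega>Y (\<phi> c)) = b}"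

end

theory Submission
  imports Defs
begin

lemma compose_X_pow_count:
  fixes \<Omega> :: "'c set" and \<omega> :: "'c \<Rightarrow> nat"
  assumes m: "m \<ge> 1"
  shows "fps_nth ((Abs_fps (\<lambda>i. of_nat (card {c \<in> \<Omega>. \<omega> c = i})) :: 'r::comm_ring_1 fps) oo fps_X ^ m) j
         = of_nat (card {c \<in> \<Omega>. m * \<omega> c = j})"
proof -
  have "fps_nth ((Abs_fps (\<lambda>i. of_nat (card {c \<in> \<Omega>. \<omega> c = i})) :: 'r fps) oo fps_X ^ m) j
      = (\<Sum>i=0..j. of_nat (card {c \<in> \<Omega>. \<omega> c = i}) * (if j = m * i then 1 else 0))"
    by (simp add: fps_compose_nth power_mult[symmetric])
  also have "\<dots> = (\<Sum>i\<in>{i\<in>{0..j}. j = m * i}. of_nat (card {c \<in> \<Omega>. \<omega> c = i}))"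
    by (simp add: sum.inter_filter[symmetric] if_distrib cong: if_cong)
  also have "\<dots> = of_nat (card {c \<in> \<Omega>. m * \<omega> c = j})"
  proof (cases "m dvd j")
    case True
    then obtain q where q: "j = m * q" by auto
    have "q \<le> j" using m q by simp
    have s: "{i\<in>{0..j}. j = m * i} = {q}" using m q \<open>q \<le> j\<close> by auto
    have "{c \<in> \<Omega>. m * \<omega> c = j} = {c \<in> \<Omega>. \<omega> c = q}" using m q by auto
    then show ?thesis using s by simp
  next
    case False
    have s: "{i\<in>{0..j}. j = m * i} = {}" using False by auto
    have e: "{c \<in> \<Omega>. m * \<omega> c = j} = {}" using False by (auto intro: dvdI)
    show ?thesis unfolding s e by simp
  qed
  finally show ?thesis .
qed

definition FS :: "'z set \<Rightarrow> 'c set \<Rightarrow> ('z \<Rightarrow> nat) \<Rightarrow> ('c \<Rightarrow> nat) \<Rightarrow> nat \<Rightarrow> ('z \<Rightarrow> 'c) set" where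
  "FS C \<Omega> m \<omega> a = {\<psi> \<in> C \<rightarrow>\<^sub>E \<Omega>. (\<Sum>Z\<in>C. m Z * \<omega> (\<psi> Z)) = a}"

lemma finite_le_fibers:
  assumes "\<forall>i. finite {c \<in> \<Omega>. \<omega> c = i}"
  shows "finite {c \<in> \<Omega>. (\<omega> c::nat) \<le> a}"
proof -
  have "{c \<in> \<Omega>. \<omega> c \<le> a} = (\<Union>i\<in>{..a}. {c \<in> \<Omega>. \<omega> c = i})" by auto
  then show ?thesis using assms by simp
qed

lemma FS_finite:
  assumes "finite C" "\<forall>Z\<in>C. m Z \<ge> 1" "\<forall>i. finite {c \<in> \<Omega>. \<omega> c = i}"
  shows "finite (FS C \<Omega> m \<omega> a)"
proof -
  have "FS C \<Omega> m \<omega> a \<subseteq> C \<rightarrow>\<^sub>E {c \<in> \<Omega>. \<omega> c \<le> a}"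
  proof
    fix \<psi> assume \<psi>: "\<psi> \<in> FS C \<Omega> m \<omega> a"
    have "\<omega> (\<psi> Z) \<le> a" if "Z \<in> C" for Z
    proof -
      have "\<omega> (\<psi> Z) \<le> m Z * \<omega> (\<psi> Z)" using assms(2) that by simp
      also have "\<dots> \<le> (\<Sum>Z\<in>C. m Z * \<omega> (\<psi> Z))"
        by (rule member_le_sum) (use assms(1) that in auto)
      finally show ?thesis using \<psi> by (simp add: FS_def)
    qed
    then show "\<psi> \<in> C \<rightarrow>\<^sub>E {c \<in> \<Omega>. \<omega> c \<le> a}" using \<psi> by (auto simp: FS_def PiE_def Pi_def)
  qed
  moreover have "finite (C \<rightarrow>\<^sub>E {c \<in> \<Omega>. \<omega> c \<le> a})"
    using assms by (intro finite_PiE finite_le_fibers) auto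
  ultimately show ?thesis by (rule finite_subset)
qed

lemma FS_insert_card:
  assumes "finite C" "z \<notin> C" "\<forall>Z\<in>insert z C. m Z \<ge> 1" "\<forall>i. finite {c \<in> \<Omega>. \<omega> c = i}"
  shows "card (FS (insert z C) \<Omega> m \<omega> a) =
     (\<Sum>j=0..a. card {c \<in> \<Omega>. m z * \<omega> c = j} * card (FS C \<Omega> m \<omega> (a - j)))"
proof -
  let ?U = "\<Union>j\<in>{0..a}. {c \<in> \<Omega>. m z * \<omega> c = j} \<times> FS C \<Omega> m \<omega> (a - j)"
  let ?f = "\<lambda>(c, \<psi>). \<psi>(z := c)"
  have fin1: "finite {c \<in> \<Omega>. m z * \<omega> c = j}" for j
  proof -
    have "{c \<in> \<Omega>. m z * \<omega> c = j} \<subseteq> {c \<in> \<Omega>. \<omega> c \<le> j}"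
      using assms(3) by auto
    then show ?thesis using finite_le_fibers[OF assms(4)] by (rule finite_subset)
  qed
  have fin2: "finite (FS C \<Omega> m \<omega> b)" for b using FS_finite assms by auto
  have inj: "inj_on ?f ?U"
  proof (rule inj_onI, clarify)
    fix c1 \<psi>1 c2 \<psi>2 j1 j2
    assume h: "\<psi>1(z := c1) = \<psi>2(z := c2)" "\<psi>1 \<in> FS C \<Omega> m \<omega> (a - j1)" "\<psi>2 \<in> FS C \<Omega> m \<omega> (a - j2)"
    have "\<psi>1 z = undefined" "\<psi>2 z = undefined" using h(2,3) assms(2) by (auto simp: FS_def PiE_def extensional_def)
    moreover have "c1 = c2" using fun_cong[OF h(1), of z] by simp
    moreover have "\<psi>1 x = \<psi>2 x" if "x \<noteq> z" for x using fun_cong[OF h(1), of x] that by simp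
    ultimately show "c1 = c2 \<and> \<psi>1 = \<psi>2" by (metis ext)
  qed
  have img: "?f ` ?U = FS (insert z C) \<Omega> m \<omega> a"
  proof
    show "?f ` ?U \<subseteq> FS (insert z C) \<Omega> m \<omega> a"
    proof
      fix x assume "x \<in> ?f ` ?U"
      then obtain c \<psi> j where h: "j \<in> {0..a}" "c \<in> \<Omega>" "m z * \<omega> c = j" "\<psi> \<in> FS C \<Omega> m \<omega> (a - j)"
        and x: "x = \<psi>(z := c)" by auto
      have "(\<Sum>Z\<in>insert z C. m Z * \<omega> ((\<psi>(z := c)) Z)) = m z * \<omega> c + (\<Sum>Z\<in>C. m Z * \<omega> (\<psi> Z))"
        using assms(1,2) by (simp add: sum.insert) (intro sum.cong, auto)
      also have "\<dots> = a" using h by (auto simp: FS_def)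
      finally show "x \<in> FS (insert z C) \<Omega> m \<omega> a"
        using h assms(2) x by (auto simp: FS_def PiE_def Pi_def extensional_def)
    qed
  next
    show "FS (insert z C) \<Omega> m \<omega> a \<subseteq> ?f ` ?U"
    proof
      fix \<phi> assume \<phi>: "\<phi> \<in> FS (insert z C) \<Omega> m \<omega> a"
      let ?\<psi> = "\<phi>(z := undefined)"
      have s: "(\<Sum>Z\<in>insert z C. m Z * \<omega> (\<phi> Z)) = m z * \<omega> (\<phi> z) + (\<Sum>Z\<in>C. m Z * \<omega> (?\<psi> Z))"
        using assms(1,2) by (simp add: sum.insert) (intro sum.cong, auto)
      have "?\<psi> \<in> FS C \<Omega> m \<omega> (a - m z * \<omega> (\<phi> z))"
        using \<phi> s assms(2) by (auto simp: FS_def PiE_def Pi_def extensional_def)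
      moreover have "m z * \<omega> (\<phi> z) \<in> {0..a}" using \<phi> s by (auto simp: FS_def)
      moreover have "\<phi> z \<in> \<Omega>" using \<phi> by (auto simp: FS_def)
      moreover have "\<phi> = ?f (\<phi> z, ?\<psi>)" by simp
      ultimately show "\<phi> \<in> ?f ` ?U" by blast
    qed
  qed
  have "card (FS (insert z C) \<Omega> m \<omega> a) = card ?U"
    using card_image[OF inj] img by simp
  also have "\<dots> = (\<Sum>j=0..a. card ({c \<in> \<Omega>. m z * \<omega> c = j} \<times> FS C \<Omega> m \<omega> (a - j)))"
    by (rule card_UN_disjoint) (use fin1 fin2 in auto)
  also have "\<dots> = (\<Sum>j=0..a. card {c \<in> \<Omega>. m z * \<omega> c = j} * card (FS C \<Omega> m \<omega> (a - j)))"
    by (simp add: card_cartesian_product)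
  finally show ?thesis .
qed

lemma FS_gen:
  assumes "finite C" "\<forall>Z\<in>C. m Z \<ge> 1" "\<forall>i. finite {c \<in> \<Omega>. \<omega> c = i}"
  shows "(Abs_fps (\<lambda>a. of_nat (card (FS C \<Omega> m \<omega> a))) :: 'r::comm_ring_1 fps)
    = (\<Prod>Z\<in>C. Abs_fps (\<lambda>i. of_nat (card {c \<in> \<Omega>. \<omega> c = i})) oo fps_X ^ m Z)"
  using assms(1,2)
proof (induction C rule: finite_induct)
  case empty
  show ?case
  proof (rule fps_ext)
    fix n
    have "FS {} \<Omega> m \<omega> n = (if n = 0 then {\<lambda>_. undefined} else {})"
      by (auto simp: FS_def)
    then show "fps_nth (Abs_fps (\<lambda>a. of_nat (card (FS {} \<Omega> m \<omega> a)))) n = fps_nth (\<Prod>Z\<in>{}. Abs_fps (\<lambda>i. of_nat (card {c \<in> \<Omega>. \<omega> c = i})) oo fps_X ^ m Z :: 'r fps) n"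
      by simp
  qed
next
  case (insert z C)
  have IH: "(Abs_fps (\<lambda>a. of_nat (card (FS C \<Omega> m \<omega> a))) :: 'r fps)
    = (\<Prod>Z\<in>C. Abs_fps (\<lambda>i. of_nat (card {c \<in> \<Omega>. \<omega> c = i})) oo fps_X ^ m Z)"
    using insert by auto
  have "(\<Prod>Z\<in>insert z C. Abs_fps (\<lambda>i. of_nat (card {c \<in> \<Omega>. \<omega> c = i})) oo fps_X ^ m Z :: 'r fps)
     = (Abs_fps (\<lambda>i. of_nat (card {c \<in> \<Omega>. \<omega> c = i})) oo fps_X ^ m z) * Abs_fps (\<lambda>a. of_nat (card (FS C \<Omega> m \<omega> a)))"
    using insert IH by simp
  also have "\<dots> = Abs_fps (\<lambda>a. of_nat (card (FS (insert z C) \<Omega> m \<omega> a)))"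
  proof (rule fps_ext)
    fix n
    show "fps_nth ((Abs_fps (\<lambda>i. of_nat (card {c \<in> \<Omega>. \<omega> c = i})) oo fps_X ^ m z) * Abs_fps (\<lambda>a. of_nat (card (FS C \<Omega> m \<omega> a)))) n
       = fps_nth (Abs_fps (\<lambda>a. of_nat (card (FS (insert z C) \<Omega> m \<omega> a))) :: 'r fps) n"
      using insert.prems
      by (simp add: fps_mult_nth compose_X_pow_count FS_insert_card[OF insert.hyps(1,2) insert.prems assms(3)])
  qed
  finally show ?case by simp
qed


lemma iter_in: "p ` S \<subseteq> S \<Longrightarrow> x \<in> S \<Longrightarrow> (p ^^ i) x \<in> S"
  by (induction i) auto

lemma iter_inj: "inj_on p A \<Longrightarrow> p ` A \<subseteq> A \<Longrightarrow> x \<in> A \<Longrightarrow> y \<in> A \<Longrightarrow> (p ^^ i) x = (p ^^ i) y \<Longrightarrow> x = y"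
proof (induction i)
  case 0 then show ?case by simp
next
  case (Suc i)
  have "(p ^^ i) x = (p ^^ i) y"
    using Suc.prems iter_in[of p A] by (auto dest: inj_onD)
  then show ?case using Suc by blast
qed

lemma periodic:
  assumes "finite A" "inj_on p A" "p ` A \<subseteq> A" "a \<in> A"
  shows "\<exists>N>0. (p ^^ N) a = a"
proof -
  have "\<not> inj_on (\<lambda>i. (p ^^ i) a) {0..card A}"
  proof
    assume inj: "inj_on (\<lambda>i. (p ^^ i) a) {0..card A}"
    have sub: "(\<lambda>i. (p ^^ i) a) ` {0..card A} \<subseteq> A" using iter_in[OF assms(3) assms(4)] by blast
    have "card {0..card A} \<le> card A" using card_inj_on_le[OF inj sub assms(1)] .
    then show False by simp
  qed
  then obtain i0 j0 where h: "i0 \<noteq> j0" "(p ^^ i0) a = (p ^^ j0) a"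
    unfolding inj_on_def by blast
  define i where "i = min i0 j0"
  define j where "j = max i0 j0"
  have ij: "i < j" "(p ^^ i) a = (p ^^ j) a" using h unfolding i_def j_def
    by (auto simp: min_def max_def)
  have jj: "j = i + (j - i)" using ij by simp
  have "(p ^^ j) a = (p ^^ (i + (j - i))) a" using jj by metis
  also have "\<dots> = (p ^^ i) ((p ^^ (j - i)) a)" by (simp only: funpow_add comp_apply)
  finally have "(p ^^ i) ((p ^^ (j - i)) a) = (p ^^ i) a" using ij by simp
  then have "(p ^^ (j - i)) a = a"
    by (rule iter_inj[OF assms(2,3) iter_in[OF assms(3,4)] assms(4)])
  then show ?thesis using ij by (intro exI[of _ "j - i"]) auto
qed

lemma period_mult: "(p ^^ N) a = a \<Longrightarrow> (p ^^ (N * k)) a = a"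
proof (induction k)
  case 0 then show ?case by simp
next
  case (Suc k)
  have "N * Suc k = N + N * k" by simp
  then have "(p ^^ (N * Suc k)) a = (p ^^ (N + N * k)) a" by metis
  also have "\<dots> = (p ^^ N) ((p ^^ (N * k)) a)" by (simp only: funpow_add comp_apply)
  finally have "(p ^^ (N * Suc k)) a = (p ^^ N) ((p ^^ (N * k)) a)" .
  then show ?case using Suc by simp
qed

lemma cyc_sub: assumes "a \<in> S" "p ` S \<subseteq> S" shows "perm_cycle p a \<subseteq> S"
proof
  fix x assume "x \<in> perm_cycle p a"
  then obtain i where "x = (p ^^ i) a" unfolding perm_cycle_def by blast
  then show "x \<in> S" using iter_in[OF assms(2,1)] by simp
qed

lemma cyc_self: "a \<in> perm_cycle p a"
proof -
  have "a = (p ^^ 0) a" by simp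
  then show ?thesis unfolding perm_cycle_def by blast
qed

lemma cyc_step: "p a \<in> perm_cycle p a"
proof -
  have "p a = (p ^^ 1) a" by simp
  then show ?thesis unfolding perm_cycle_def by blast
qed

lemma cyc_trans: "b \<in> perm_cycle p a \<Longrightarrow> perm_cycle p b \<subseteq> perm_cycle p a"
proof
  fix x assume b: "b \<in> perm_cycle p a" and x: "x \<in> perm_cycle p b"
  obtain i where i: "b = (p ^^ i) a" using b unfolding perm_cycle_def by auto
  obtain j where j: "x = (p ^^ j) b" using x unfolding perm_cycle_def by auto
  have "x = (p ^^ (j + i)) a" using i j by (simp only: funpow_add comp_apply)
  then show "x \<in> perm_cycle p a" unfolding perm_cycle_def by blast
qed

lemma cyc_eq:
  assumes "finite A" "inj_on p A" "p ` A \<subseteq> A" "a \<in> A" "b \<in> perm_cycle p a"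
  shows "perm_cycle p b = perm_cycle p a"
proof
  show "perm_cycle p b \<subseteq> perm_cycle p a" using cyc_trans[OF assms(5)] .
  obtain N where N: "N > 0" "(p ^^ N) a = a" using periodic[OF assms(1-4)] by blast
  obtain i where i: "b = (p ^^ i) a" using assms(5) unfolding perm_cycle_def by auto
  have le: "i \<le> N * i" using N by simp
  have eq: "N * i - i + i = N * i" using le by simp
  have "(p ^^ (N * i - i)) b = (p ^^ (N * i - i + i)) a" using i by (simp only: funpow_add comp_apply)
  also have "\<dots> = (p ^^ (N * i)) a" by (simp only: eq)
  also have "\<dots> = a" by (rule period_mult[OF N(2)])
  finally have "(p ^^ (N * i - i)) b = a" .
  then have "a \<in> perm_cycle p b" unfolding perm_cycle_def by (intro CollectI exI[of _ "N * i - i"]) simp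
  then show "perm_cycle p a \<subseteq> perm_cycle p b" by (rule cyc_trans)
qed

lemma fixed_const:
  assumes "\<forall>x\<in>S. \<phi> (p x) = \<phi> x" "p ` S \<subseteq> S" "a \<in> S"
  shows "\<phi> ((p ^^ i) a) = \<phi> a"
proof (induction i)
  case 0 then show ?case by simp
next
  case (Suc i)
  have "(p ^^ i) a \<in> S" using iter_in[OF assms(2,3)] .
  then have "\<phi> (p ((p ^^ i) a)) = \<phi> ((p ^^ i) a)" using assms(1) by blast
  then show ?case using Suc by simp
qed

lemma fixed_const_cyc:
  assumes "\<forall>x\<in>S. \<phi> (p x) = \<phi> x" "p ` S \<subseteq> S" "a \<in> S" "b \<in> perm_cycle p a"
  shows "\<phi> b = \<phi> a"
  using assms fixed_const[OF assms(1-3)] unfolding perm_cycle_def by auto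

definition fixcol :: "('a \<Rightarrow> 'a) \<Rightarrow> 'a set \<Rightarrow> 'c set \<Rightarrow> ('c \<Rightarrow> nat) \<Rightarrow> nat \<Rightarrow> ('a \<Rightarrow> 'c) set" where
  "fixcol p S \<Omega> \<omega> a = {\<phi> \<in> S \<rightarrow>\<^sub>E \<Omega>. (\<forall>x\<in>S. \<phi> (p x) = \<phi> x) \<and> (\<Sum>x\<in>S. \<omega> (\<phi> x)) = a}"


lemma fix_gen:
  fixes p :: "'a \<Rightarrow> 'a" and S A :: "'a set" and \<Omega> :: "'c set" and \<omega> :: "'c \<Rightarrow> nat"
  assumes A: "finite A" "inj_on p A" "p ` A \<subseteq> A" and S: "S \<subseteq> A" "p ` S \<subseteq> S"
    and fib: "\<forall>i. finite {c \<in> \<Omega>. \<omega> c = i}"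
  shows "(Abs_fps (\<lambda>a. of_nat (card (fixcol p S \<Omega> \<omega> a))) :: 'r::comm_ring_1 fps)
    = (\<Prod>k\<in>{1..card A}. (Abs_fps (\<lambda>i. of_nat (card {c \<in> \<Omega>. \<omega> c = i})) oo fps_X ^ k) ^ cycles_in p S k)"
proof -
  define cyc where "cyc = perm_cycle p"
  define C where "C = cyc ` S"
  define f :: "'r fps" where "f = Abs_fps (\<lambda>i. of_nat (card {c \<in> \<Omega>. \<omega> c = i}))"
  have finS: "finite S" using A(1) S(1) finite_subset by blast
  have finC: "finite C" unfolding C_def using finS by simp
  have csub: "cyc x \<subseteq> S" if "x \<in> S" for x unfolding cyc_def using cyc_sub[OF that S(2)] .
  have ceq: "cyc y = cyc x" if "x \<in> S" "y \<in> cyc x" for x y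
    unfolding cyc_def using cyc_eq[OF A, of x y] that S(1) unfolding cyc_def by blast
  have cself: "x \<in> cyc x" for x unfolding cyc_def by (rule cyc_self)
  have cfin: "finite Z" if "Z \<in> C" for Z using that csub finS unfolding C_def by (auto intro: finite_subset)
  have cbound: "1 \<le> card Z \<and> card Z \<le> card A" if ZC: "Z \<in> C" for Z
  proof -
    obtain x where x: "x \<in> S" "Z = cyc x" using ZC unfolding C_def by blast
    have "Z \<noteq> {}" using cself x by blast
    then have "1 \<le> card Z" using cfin[OF ZC] by (simp add: Suc_le_eq card_gt_0_iff)
    moreover have "card Z \<le> card A" using csub[OF x(1)] x(2) S(1) A(1) by (intro card_mono) auto
    ultimately show ?thesis by blast
  qed
  have cls: "{x \<in> S. cyc x = Z} = Z" if ZC: "Z \<in> C" for Z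
  proof -
    obtain a where a: "a \<in> S" "Z = cyc a" using ZC unfolding C_def by blast
    show ?thesis
    proof
      show "{x \<in> S. cyc x = Z} \<subseteq> Z" using cself by blast
      show "Z \<subseteq> {x \<in> S. cyc x = Z}" using a csub ceq by blast
    qed
  qed
  have w: "(\<Sum>x\<in>S. \<omega> (\<psi> (cyc x))) = (\<Sum>Z\<in>C. card Z * \<omega> (\<psi> Z))" for \<psi> :: "'a set \<Rightarrow> 'c"
  proof -
    have "(\<Sum>x\<in>S. \<omega> (\<psi> (cyc x))) = (\<Sum>Z\<in>C. \<Sum>x\<in>{x \<in> S. cyc x = Z}. \<omega> (\<psi> (cyc x)))"
      unfolding C_def by (rule sum.image_gen[OF finS])
    also have "\<dots> = (\<Sum>Z\<in>C. \<Sum>x\<in>Z. \<omega> (\<psi> Z))"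
    proof (rule sum.cong[OF refl])
      fix Z assume Z: "Z \<in> C"
      have "(\<Sum>x\<in>{x \<in> S. cyc x = Z}. \<omega> (\<psi> (cyc x))) = (\<Sum>x\<in>{x \<in> S. cyc x = Z}. \<omega> (\<psi> Z))"
        by (rule sum.cong) auto
      then show "(\<Sum>x\<in>{x \<in> S. cyc x = Z}. \<omega> (\<psi> (cyc x))) = (\<Sum>x\<in>Z. \<omega> (\<psi> Z))"
        using cls[OF Z] by simp
    qed
    also have "\<dots> = (\<Sum>Z\<in>C. card Z * \<omega> (\<psi> Z))" by simp
    finally show ?thesis .
  qed
  define T :: "('a set \<Rightarrow> 'c) \<Rightarrow> 'a \<Rightarrow> 'c" where "T = (\<lambda>\<psi>. restrict (\<lambda>x. \<psi> (cyc x)) S)"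
  have step1: "card (fixcol p S \<Omega> \<omega> a) = card (FS C \<Omega> card \<omega> a)" for a
  proof -
    have inj: "inj_on T (FS C \<Omega> card \<omega> a)"
    proof (rule inj_onI)
      fix \<psi>1 \<psi>2 assume h: "\<psi>1 \<in> FS C \<Omega> card \<omega> a" "\<psi>2 \<in> FS C \<Omega> card \<omega> a" "T \<psi>1 = T \<psi>2"
      show "\<psi>1 = \<psi>2"
      proof (rule extensionalityI)
        show "\<psi>1 \<in> extensional C" "\<psi>2 \<in> extensional C" using h by (auto simp: FS_def PiE_def)
        fix Z assume "Z \<in> C"
        then obtain x where x: "x \<in> S" "Z = cyc x" unfolding C_def by blast
        show "\<psi>1 Z = \<psi>2 Z" using fun_cong[OF h(3), of x] x by (simp add: T_def)
      qed
    qed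
    have img: "T ` FS C \<Omega> card \<omega> a = fixcol p S \<Omega> \<omega> a"
    proof
      show "T ` FS C \<Omega> card \<omega> a \<subseteq> fixcol p S \<Omega> \<omega> a"
      proof
        fix \<phi> assume "\<phi> \<in> T ` FS C \<Omega> card \<omega> a"
        then obtain \<psi> where \<psi>: "\<psi> \<in> FS C \<Omega> card \<omega> a" and \<phi>: "\<phi> = T \<psi>" by blast
        have "\<phi> \<in> S \<rightarrow>\<^sub>E \<Omega>" using \<psi> unfolding \<phi> T_def FS_def C_def by auto
        moreover have "\<phi> (p x) = \<phi> x" if "x \<in> S" for x
        proof -
          have "p x \<in> S" using that S(2) by blast
          moreover have "cyc (p x) = cyc x" using ceq[OF that] cyc_step unfolding cyc_def by metis
          ultimately show ?thesis using that unfolding \<phi> T_def by simp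
        qed
        moreover have "(\<Sum>x\<in>S. \<omega> (\<phi> x)) = a"
        proof -
          have "(\<Sum>x\<in>S. \<omega> (\<phi> x)) = (\<Sum>x\<in>S. \<omega> (\<psi> (cyc x)))" unfolding \<phi> T_def by simp
          then show ?thesis using w \<psi> by (simp add: FS_def)
        qed
        ultimately show "\<phi> \<in> fixcol p S \<Omega> \<omega> a" unfolding fixcol_def by blast
      qed
    next
      show "fixcol p S \<Omega> \<omega> a \<subseteq> T ` FS C \<Omega> card \<omega> a"
      proof
        fix \<phi> assume \<phi>: "\<phi> \<in> fixcol p S \<Omega> \<omega> a"
        have fx: "\<forall>x\<in>S. \<phi> (p x) = \<phi> x" using \<phi> unfolding fixcol_def by blast
        define \<psi> where "\<psi> = restrict (\<lambda>Z. \<phi> (SOME x. x \<in> Z)) C"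
        have val: "\<psi> (cyc x) = \<phi> x" if "x \<in> S" for x
        proof -
          have "(SOME y. y \<in> cyc x) \<in> cyc x" using cself by (rule someI)
          then have "\<phi> (SOME y. y \<in> cyc x) = \<phi> x"
            using fixed_const_cyc[OF fx S(2) that] unfolding cyc_def by blast
          then show ?thesis using that unfolding \<psi>_def C_def by simp
        qed
        have T\<psi>: "T \<psi> = \<phi>"
        proof (rule extensionalityI)
          show "T \<psi> \<in> extensional S" unfolding T_def by simp
          show "\<phi> \<in> extensional S" using \<phi> unfolding fixcol_def PiE_def by blast
          fix x assume "x \<in> S" then show "T \<psi> x = \<phi> x" using val unfolding T_def by simp
        qed
        have "\<psi> \<in> C \<rightarrow>\<^sub>E \<Omega>"
        proof -
          have "\<psi> Z \<in> \<Omega>" if "Z \<in> C" for Z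
          proof -
            obtain x where x: "x \<in> S" "Z = cyc x" using \<open>Z \<in> C\<close> unfolding C_def by blast
            then show ?thesis using val[OF x(1)] \<phi> unfolding fixcol_def PiE_def Pi_def by auto
          qed
          then show ?thesis unfolding \<psi>_def by auto
        qed
        moreover have "(\<Sum>Z\<in>C. card Z * \<omega> (\<psi> Z)) = a"
        proof -
          have "(\<Sum>Z\<in>C. card Z * \<omega> (\<psi> Z)) = (\<Sum>x\<in>S. \<omega> (\<psi> (cyc x)))" using w by simp
          also have "\<dots> = (\<Sum>x\<in>S. \<omega> (\<phi> x))" using val by simp
          finally show ?thesis using \<phi> unfolding fixcol_def by simp
        qed
        ultimately have "\<psi> \<in> FS C \<Omega> card \<omega> a" unfolding FS_def by blast
        then show "\<phi> \<in> T ` FS C \<Omega> card \<omega> a" using T\<psi> by blast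
      qed
    qed
    show ?thesis using card_image[OF inj] img by simp
  qed
  have "(Abs_fps (\<lambda>a. of_nat (card (fixcol p S \<Omega> \<omega> a))) :: 'r fps)
      = Abs_fps (\<lambda>a. of_nat (card (FS C \<Omega> card \<omega> a)))" using step1 by simp
  also have "\<dots> = (\<Prod>Z\<in>C. f oo fps_X ^ card Z)"
    unfolding f_def by (rule FS_gen[OF finC _ fib]) (use cbound in auto)
  also have "\<dots> = (\<Prod>k\<in>{1..card A}. \<Prod>Z\<in>{Z \<in> C. card Z = k}. f oo fps_X ^ card Z)"
    by (rule prod.group[symmetric]) (use finC cbound in auto)
  also have "\<dots> = (\<Prod>k\<in>{1..card A}. (f oo fps_X ^ k) ^ card {Z \<in> C. card Z = k})"
  proof (rule prod.cong[OF refl])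
    fix k
    have "(\<Prod>Z\<in>{Z \<in> C. card Z = k}. f oo fps_X ^ card Z) = (\<Prod>Z\<in>{Z \<in> C. card Z = k}. f oo fps_X ^ k)"
      by (rule prod.cong) auto
    then show "(\<Prod>Z\<in>{Z \<in> C. card Z = k}. f oo fps_X ^ card Z) = (f oo fps_X ^ k) ^ card {Z \<in> C. card Z = k}"
      by simp
  qed
  also have "\<dots> = (\<Prod>k\<in>{1..card A}. (f oo fps_X ^ k) ^ cycles_in p S k)"
  proof (rule prod.cong[OF refl])
    fix k
    have "{perm_cycle p a |a. a \<in> S \<and> perm_cycle p a \<subseteq> S \<and> card (perm_cycle p a) = k} = {Z \<in> C. card Z = k}"
      unfolding C_def using csub unfolding cyc_def by blast
    then show "(f oo fps_X ^ k) ^ card {Z \<in> C. card Z = k} = (f oo fps_X ^ k) ^ cycles_in p S k"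
      unfolding cycles_in_def by simp
  qed
  finally show ?thesis unfolding f_def .
qed


lemma fps_const_prod: "fps_const (prod f S) = (\<Prod>k\<in>S. fps_const (f k))"
  by (induction S rule: infinite_finite_induct) (simp_all add: fps_const_mult[symmetric])

lemma act_col_mult:
  assumes "group_action G A \<Gamma>" "g \<in> carrier G" "h \<in> carrier G"
  shows "act_col \<Gamma> A (g \<otimes>\<^bsub>G\<^esub> h) \<phi> = act_col \<Gamma> A h (act_col \<Gamma> A g \<phi>)"
proof -
  have "\<Gamma> h x \<in> A" if "x \<in> A" for x using group_action.element_image[OF assms(1) assms(3) that refl] .
  moreover have "\<Gamma> (g \<otimes>\<^bsub>G\<^esub> h) x = \<Gamma> g (\<Gamma> h x)" if "x \<in> A" for x
    using group_action.composition_rule[OF assms(1) that assms(2,3)] .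
  ultimately show ?thesis unfolding act_col_def by (intro ext) auto
qed

lemma act_col_one:
  assumes "group_action G A \<Gamma>" "\<phi> \<in> extensional A"
  shows "act_col \<Gamma> A \<one>\<^bsub>G\<^esub> \<phi> = \<phi>"
proof -
  have "\<Gamma> \<one>\<^bsub>G\<^esub> = (\<lambda>x\<in>A. x)" using group_action.id_eq_one[OF assms(1)] by simp
  then show ?thesis unfolding act_col_def using assms(2) by (intro ext) (auto simp: extensional_def)
qed


theorem mainTheorem2:
  fixes G :: "('g, 'm) monoid_scheme" and \<Gamma> :: "'g \<Rightarrow> 'a \<Rightarrow> 'a"
    and A X Y :: "'a set" and \<Omega>X \<Omega>Y :: "'c set" and \<omega>X \<omega>Y :: "'c \<Rightarrow> nat"
  assumes "group_action G A \<Gamma>"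
    and "finite (carrier G)"
    and "finite A" and "A = X \<union> Y" and "X \<inter> Y = {}"
    and "\<forall>g\<in>carrier G. \<forall>a\<in>A. (\<Gamma> g a \<in> X \<longleftrightarrow> a \<in> X) \<and> (\<Gamma> g a \<in> Y \<longleftrightarrow> a \<in> Y)"
    and "\<Omega>X \<inter> \<Omega>Y = {}"
    and "\<forall>c\<in>\<Omega>X. \<omega>X c > 0" and "\<forall>c\<in>\<Omega>Y. \<omega>Y c > 0"
    and "\<forall>i. finite {c \<in> \<Omega>X. \<omega>X c = i}" and "\<forall>i. finite {c \<in> \<Omega>Y. \<omega>Y c = i}"
  shows "Abs_fps (\<lambda>b. Abs_fps (\<lambda>a. of_nat (N_orbits G \<Gamma> A X Y \<Omega>X \<Omega>Y \<omega>X \<omega>Y a b)))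
       = bip_cycle_index G \<Gamma> X Y (card A)
           (\<lambda>k. fps_const (gen_fun \<Omega>X \<omega>X oo fps_X ^ k))
           (\<lambda>k. Abs_fps (\<lambda>i. fps_const (of_nat (card {c \<in> \<Omega>Y. \<omega>Y c = i}))) oo fps_X ^ k)"
proof -
  note ga = assms(1)
  have grp: "group G" using ga unfolding group_action_def group_hom_def by blast
  have Gfin: "finite (carrier G)" by fact
  have part: "\<forall>g\<in>carrier G. \<forall>a\<in>A. (\<Gamma> g a \<in> X \<longleftrightarrow> a \<in> X) \<and> (\<Gamma> g a \<in> Y \<longleftrightarrow> a \<in> Y)" by fact
  have XA: "X \<subseteq> A" and YA: "Y \<subseteq> A" using assms(4) by auto
  have partX: "\<Gamma> g x \<in> X \<longleftrightarrow> x \<in> X" if "g \<in> carrier G" "x \<in> A" for g x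
    using part that by simp
  have partY: "\<Gamma> g x \<in> Y \<longleftrightarrow> x \<in> Y" if "g \<in> carrier G" "x \<in> A" for g x
    using part that by simp
  have GA: "\<Gamma> g x \<in> A" if "g \<in> carrier G" "x \<in> A" for g x
    using group_action.element_image[OF ga that refl] .
  have Ginj: "inj_on (\<Gamma> g) A" if "g \<in> carrier G" for g using group_action.inj_prop[OF ga that] .
  have Gsurj: "\<Gamma> g ` A = A" if "g \<in> carrier G" for g using group_action.surj_prop[OF ga that] .
  have GX: "\<Gamma> g ` X = X" if g: "g \<in> carrier G" for g
  proof
    show "\<Gamma> g ` X \<subseteq> X"
    proof (rule image_subsetI)
      fix x assume x: "x \<in> X"
      then have "x \<in> A" using XA by blast
      then show "\<Gamma> g x \<in> X" using partX[OF g] x by simp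
    qed
    show "X \<subseteq> \<Gamma> g ` X"
    proof
      fix x assume x: "x \<in> X"
      then have "x \<in> A" using XA by blast
      then have "x \<in> \<Gamma> g ` A" using Gsurj[OF g] by simp
      then obtain y where y: "y \<in> A" "x = \<Gamma> g y" by (rule imageE)
      then have "y \<in> X" using partX[OF g y(1)] x by simp
      then show "x \<in> \<Gamma> g ` X" using y by (simp add: image_eqI)
    qed
  qed
  have GY: "\<Gamma> g ` Y = Y" if g: "g \<in> carrier G" for g
  proof
    show "\<Gamma> g ` Y \<subseteq> Y"
    proof (rule image_subsetI)
      fix x assume x: "x \<in> Y"
      then have "x \<in> A" using YA by blast
      then show "\<Gamma> g x \<in> Y" using partY[OF g] x by simp
    qed
    show "Y \<subseteq> \<Gamma> g ` Y"
    proof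
      fix x assume x: "x \<in> Y"
      then have "x \<in> A" using YA by blast
      then have "x \<in> \<Gamma> g ` A" using Gsurj[OF g] by simp
      then obtain y where y: "y \<in> A" "x = \<Gamma> g y" by (rule imageE)
      then have "y \<in> Y" using partY[OF g y(1)] x by simp
      then show "x \<in> \<Gamma> g ` Y" using y by (simp add: image_eqI)
    qed
  qed
  define valid where "valid = valid_colorings A X Y \<Omega>X \<Omega>Y"
  define E where "E = (\<lambda>a b. {\<phi> \<in> valid. (\<Sum>c\<in>X. \<omega>X (\<phi> c)) = a \<and> (\<Sum>c\<in>Y. \<omega>Y (\<phi> c)) = b})"
  have validI: "\<phi> \<in> valid \<longleftrightarrow> \<phi> \<in> extensional A \<and> (\<forall>c\<in>X. \<phi> c \<in> \<Omega>X) \<and> (\<forall>c\<in>Y. \<phi> c \<in> \<Omega>Y)" for \<phi>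
    unfolding valid_def valid_colorings_def using assms(4,5,7) by (auto simp: PiE_def Pi_def) 
  have Efin: "finite (E a b)" for a b
  proof -
    have "E a b \<subseteq> A \<rightarrow>\<^sub>E ({c \<in> \<Omega>X. \<omega>X c \<le> a} \<union> {c \<in> \<Omega>Y. \<omega>Y c \<le> b})"
    proof
      fix \<phi> assume \<phi>: "\<phi> \<in> E a b"
      have v: "\<phi> \<in> valid" and wa: "(\<Sum>c\<in>X. \<omega>X (\<phi> c)) = a" and wb: "(\<Sum>c\<in>Y. \<omega>Y (\<phi> c)) = b"
        using \<phi> unfolding E_def by auto
      have "\<phi> c \<in> {c \<in> \<Omega>X. \<omega>X c \<le> a} \<union> {c \<in> \<Omega>Y. \<omega>Y c \<le> b}" if c: "c \<in> A" for c
      proof (cases "c \<in> X")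
        case True
        have "\<omega>X (\<phi> c) \<le> (\<Sum>c\<in>X. \<omega>X (\<phi> c))"
          by (rule member_le_sum) (use True assms(3) XA finite_subset in auto)
        then show ?thesis using True v wa validI by auto
      next
        case False
        then have cY: "c \<in> Y" using c assms(4) by blast
        have "\<omega>Y (\<phi> c) \<le> (\<Sum>c\<in>Y. \<omega>Y (\<phi> c))"
          by (rule member_le_sum) (use cY assms(3) YA finite_subset in auto)
        then show ?thesis using cY v wb validI by auto
      qed
      then show "\<phi> \<in> A \<rightarrow>\<^sub>E ({c \<in> \<Omega>X. \<omega>X c \<le> a} \<union> {c \<in> \<Omega>Y. \<omega>Y c \<le> b})"
        using v validI by (auto simp: PiE_def Pi_def)
    qed
    moreover have "finite (A \<rightarrow>\<^sub>E ({c \<in> \<Omega>X. \<omega>X c \<le> a} \<union> {c \<in> \<Omega>Y. \<omega>Y c \<le> b}))"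
      using assms(3,10,11) finite_le_fibers by (intro finite_PiE) auto
    ultimately show ?thesis by (rule finite_subset)
  qed
  have sumX: "(\<Sum>c\<in>X. h (\<Gamma> g c)) = (\<Sum>c\<in>X. h c)" if g: "g \<in> carrier G" for g and h :: "'a \<Rightarrow> nat"
  proof -
    have "inj_on (\<Gamma> g) X" using Ginj[OF g] XA inj_on_subset by blast
    then have "(\<Sum>c\<in>\<Gamma> g ` X. h c) = (\<Sum>c\<in>X. h (\<Gamma> g c))" by (simp add: sum.reindex)
    then show ?thesis using GX[OF g] by simp
  qed
  have sumY: "(\<Sum>c\<in>Y. h (\<Gamma> g c)) = (\<Sum>c\<in>Y. h c)" if g: "g \<in> carrier G" for g and h :: "'a \<Rightarrow> nat"
  proof -
    have "inj_on (\<Gamma> g) Y" using Ginj[OF g] YA inj_on_subset by blast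
    then have "(\<Sum>c\<in>\<Gamma> g ` Y. h c) = (\<Sum>c\<in>Y. h (\<Gamma> g c))" by (simp add: sum.reindex)
    then show ?thesis using GY[OF g] by simp
  qed
  have inv_valid: "act_col \<Gamma> A g \<phi> \<in> valid" if g: "g \<in> carrier G" and \<phi>: "\<phi> \<in> valid" for g \<phi>
  proof -
    have "\<forall>c\<in>X. act_col \<Gamma> A g \<phi> c \<in> \<Omega>X"
      using \<phi> validI GX[OF g] XA unfolding act_col_def by auto
    moreover have "\<forall>c\<in>Y. act_col \<Gamma> A g \<phi> c \<in> \<Omega>Y"
      using \<phi> validI GY[OF g] YA unfolding act_col_def by auto
    ultimately show ?thesis using validI unfolding act_col_def by auto
  qed
  have inv_E: "act_col \<Gamma> A g \<phi> \<in> E a b" if g: "g \<in> carrier G" and \<phi>: "\<phi> \<in> E a b" for g \<phi> a b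
  proof -
    have "(\<Sum>c\<in>X. \<omega>X (act_col \<Gamma> A g \<phi> c)) = (\<Sum>c\<in>X. \<omega>X (\<phi> (\<Gamma> g c)))"
      using XA unfolding act_col_def by (intro sum.cong) auto
    also have "\<dots> = (\<Sum>c\<in>X. \<omega>X (\<phi> c))" using sumX[OF g, of "\<lambda>c. \<omega>X (\<phi> c)"] by simp
    finally have 1: "(\<Sum>c\<in>X. \<omega>X (act_col \<Gamma> A g \<phi> c)) = a" using \<phi> unfolding E_def by simp
    have "(\<Sum>c\<in>Y. \<omega>Y (act_col \<Gamma> A g \<phi> c)) = (\<Sum>c\<in>Y. \<omega>Y (\<phi> (\<Gamma> g c)))"
      using YA unfolding act_col_def by (intro sum.cong) auto
    also have "\<dots> = (\<Sum>c\<in>Y. \<omega>Y (\<phi> c))" using sumY[OF g, of "\<lambda>c. \<omega>Y (\<phi> c)"] by simp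
    finally have 2: "(\<Sum>c\<in>Y. \<omega>Y (act_col \<Gamma> A g \<phi> c)) = b" using \<phi> unfolding E_def by simp
    show ?thesis using 1 2 inv_valid[OF g] \<phi> unfolding E_def by auto
  qed
  have ext_valid: "\<phi> \<in> extensional A" if "\<phi> \<in> valid" for \<phi> using that validI by blast
  have act_inv_cancel: "act_col \<Gamma> A g (act_col \<Gamma> A (inv\<^bsub>G\<^esub> g) \<phi>) = \<phi>"
    if g: "g \<in> carrier G" and \<phi>: "\<phi> \<in> valid" for g \<phi>
  proof -
    have "act_col \<Gamma> A g (act_col \<Gamma> A (inv\<^bsub>G\<^esub> g) \<phi>) = act_col \<Gamma> A (inv\<^bsub>G\<^esub> g \<otimes>\<^bsub>G\<^esub> g) \<phi>"
      using act_col_mult[OF ga group.inv_closed[OF grp g] g, of \<phi>] by simp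
    also have "\<dots> = \<phi>" using g grp act_col_one[OF ga ext_valid[OF \<phi>]] by (simp add: group.l_inv)
    finally show ?thesis .
  qed
  have act_inv_cancel2: "act_col \<Gamma> A (inv\<^bsub>G\<^esub> g) (act_col \<Gamma> A g \<phi>) = \<phi>"
    if g: "g \<in> carrier G" and \<phi>: "\<phi> \<in> valid" for g \<phi>
    using act_inv_cancel[of "inv\<^bsub>G\<^esub> g" \<phi>] g \<phi> grp by (simp add: group.inv_closed group.inv_inv)
  (* the left action *)
  define \<psi> where "\<psi> = (\<lambda>a b. \<lambda>g. \<lambda>\<phi>\<in>E a b. act_col \<Gamma> A (inv\<^bsub>G\<^esub> g) \<phi>)"
  have Einv: "inv\<^bsub>G\<^esub> g \<in> carrier G" if "g \<in> carrier G" for g using that grp by (simp add: group.inv_closed)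
  have Evalid: "E a b \<subseteq> valid" for a b unfolding E_def by blast
  have \<psi>Bij: "\<psi> a b g \<in> Bij (E a b)" if g: "g \<in> carrier G" for g a b
  proof -
    have "bij_betw (\<psi> a b g) (E a b) (E a b)"
    proof (rule bij_betw_byWitness[where f' = "\<psi> a b (inv\<^bsub>G\<^esub> g)"])
      show "\<forall>x\<in>E a b. \<psi> a b (inv\<^bsub>G\<^esub> g) (\<psi> a b g x) = x"
      proof
        fix x assume x: "x \<in> E a b"
        have v: "x \<in> valid" using x Evalid by blast
        have 1: "\<psi> a b g x = act_col \<Gamma> A (inv\<^bsub>G\<^esub> g) x" using x unfolding \<psi>_def by simp
        have 2: "act_col \<Gamma> A (inv\<^bsub>G\<^esub> g) x \<in> E a b" using inv_E[OF Einv[OF g] x] .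
        have 3: "inv\<^bsub>G\<^esub> (inv\<^bsub>G\<^esub> g) = g" using group.inv_inv[OF grp g] .
        show "\<psi> a b (inv\<^bsub>G\<^esub> g) (\<psi> a b g x) = x"
          unfolding 1 using 2 3 act_inv_cancel[OF g v] unfolding \<psi>_def by simp
      qed
      show "\<forall>x\<in>E a b. \<psi> a b g (\<psi> a b (inv\<^bsub>G\<^esub> g) x) = x"
      proof
        fix x assume x: "x \<in> E a b"
        have v: "x \<in> valid" using x Evalid by blast
        have 3: "inv\<^bsub>G\<^esub> (inv\<^bsub>G\<^esub> g) = g" using group.inv_inv[OF grp g] .
        have 1: "\<psi> a b (inv\<^bsub>G\<^esub> g) x = act_col \<Gamma> A g x" using x 3 unfolding \<psi>_def by simp
        have 2: "act_col \<Gamma> A g x \<in> E a b" using inv_E[OF g x] .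
        show "\<psi> a b g (\<psi> a b (inv\<^bsub>G\<^esub> g) x) = x"
          unfolding 1 using 2 act_inv_cancel2[OF g v] unfolding \<psi>_def by simp
      qed
      show "\<psi> a b g ` E a b \<subseteq> E a b" using inv_E Einv g unfolding \<psi>_def by auto
      show "\<psi> a b (inv\<^bsub>G\<^esub> g) ` E a b \<subseteq> E a b" using inv_E g group.inv_inv[OF grp g] unfolding \<psi>_def by auto
    qed
    then show ?thesis unfolding Bij_def \<psi>_def by simp
  qed
  have \<psi>ga: "group_action G (E a b) (\<psi> a b)" for a b
  proof -
    have hom: "\<psi> a b \<in> hom G (BijGroup (E a b))"
    proof (rule homI)
      show "\<psi> a b g \<in> carrier (BijGroup (E a b))" if "g \<in> carrier G" for g
        using \<psi>Bij[OF that] by (simp add: BijGroup_def)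
      show "\<psi> a b (g \<otimes>\<^bsub>G\<^esub> h) = \<psi> a b g \<otimes>\<^bsub>BijGroup (E a b)\<^esub> \<psi> a b h"
        if g: "g \<in> carrier G" and h: "h \<in> carrier G" for g h
      proof -
        have "\<psi> a b g \<otimes>\<^bsub>BijGroup (E a b)\<^esub> \<psi> a b h = compose (E a b) (\<psi> a b g) (\<psi> a b h)"
          using \<psi>Bij[OF g] \<psi>Bij[OF h] by (simp add: BijGroup_def)
        also have "\<dots> = \<psi> a b (g \<otimes>\<^bsub>G\<^esub> h)"
        proof (rule ext)
          fix \<phi>
          show "compose (E a b) (\<psi> a b g) (\<psi> a b h) \<phi> = \<psi> a b (g \<otimes>\<^bsub>G\<^esub> h) \<phi>"
          proof (cases "\<phi> \<in> E a b")
            case True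
            have "act_col \<Gamma> A (inv\<^bsub>G\<^esub> (g \<otimes>\<^bsub>G\<^esub> h)) \<phi> = act_col \<Gamma> A (inv\<^bsub>G\<^esub> h \<otimes>\<^bsub>G\<^esub> inv\<^bsub>G\<^esub> g) \<phi>"
              using g h grp by (simp add: group.inv_mult_group)
            also have "\<dots> = act_col \<Gamma> A (inv\<^bsub>G\<^esub> g) (act_col \<Gamma> A (inv\<^bsub>G\<^esub> h) \<phi>)"
              by (rule act_col_mult[OF ga Einv[OF h] Einv[OF g]])
            finally show ?thesis using True inv_E[OF Einv[OF h] True] unfolding \<psi>_def compose_def by simp
          next
            case False
            then show ?thesis unfolding \<psi>_def compose_def by simp
          qed
        qed
        finally show ?thesis by simp
      qed
    qed
    show ?thesis unfolding group_action_def group_hom_def group_hom_axioms_def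
      using grp group_BijGroup hom by blast
  qed
  have orbit_eq: "orbit G (\<psi> a b) \<phi> = {act_col \<Gamma> A g \<phi> | g. g \<in> carrier G}" if \<phi>: "\<phi> \<in> E a b" for \<phi> a b
  proof -
    have "orbit G (\<psi> a b) \<phi> = {act_col \<Gamma> A (inv\<^bsub>G\<^esub> g) \<phi> | g. g \<in> carrier G}"
      unfolding orbit_def \<psi>_def using \<phi> by simp
    also have "\<dots> = {act_col \<Gamma> A g \<phi> | g. g \<in> carrier G}"
    proof
      show "{act_col \<Gamma> A (inv\<^bsub>G\<^esub> g) \<phi> | g. g \<in> carrier G} \<subseteq> {act_col \<Gamma> A g \<phi> | g. g \<in> carrier G}"
        using Einv by blast
      show "{act_col \<Gamma> A g \<phi> | g. g \<in> carrier G} \<subseteq> {act_col \<Gamma> A (inv\<^bsub>G\<^esub> g) \<phi> | g. g \<in> carrier G}"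
      proof clarify
        fix g assume g: "g \<in> carrier G"
        have "act_col \<Gamma> A g \<phi> = act_col \<Gamma> A (inv\<^bsub>G\<^esub> (inv\<^bsub>G\<^esub> g)) \<phi>" using g grp by (simp add: group.inv_inv)
        then show "\<exists>h. act_col \<Gamma> A g \<phi> = act_col \<Gamma> A (inv\<^bsub>G\<^esub> h) \<phi> \<and> h \<in> carrier G" using Einv[OF g] by blast
      qed
    qed
    finally show ?thesis .
  qed
  have orbits_eq: "orbits G (E a b) (\<psi> a b) = {Orb \<in> col_orbits G \<Gamma> A valid.
            \<forall>\<phi>\<in>Orb. (\<Sum>c\<in>X. \<omega>X (\<phi> c)) = a \<and> (\<Sum>c\<in>Y. \<omega>Y (\<phi> c)) = b}" for a b
  proof
    show "orbits G (E a b) (\<psi> a b) \<subseteq> {Orb \<in> col_orbits G \<Gamma> A valid.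
            \<forall>\<phi>\<in>Orb. (\<Sum>c\<in>X. \<omega>X (\<phi> c)) = a \<and> (\<Sum>c\<in>Y. \<omega>Y (\<phi> c)) = b}"
    proof
      fix Orb assume "Orb \<in> orbits G (E a b) (\<psi> a b)"
      then obtain \<phi> where \<phi>: "\<phi> \<in> E a b" and O: "Orb = orbit G (\<psi> a b) \<phi>" unfolding orbits_def by blast
      have O2: "Orb = {act_col \<Gamma> A g \<phi> | g. g \<in> carrier G}" using O orbit_eq[OF \<phi>] by simp
      have "Orb \<in> col_orbits G \<Gamma> A valid" unfolding O2 col_orbits_def using \<phi> Evalid by blast
      moreover have "\<forall>\<phi>'\<in>Orb. (\<Sum>c\<in>X. \<omega>X (\<phi>' c)) = a \<and> (\<Sum>c\<in>Y. \<omega>Y (\<phi>' c)) = b"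
        using inv_E[OF _ \<phi>] unfolding O2 E_def by blast
      ultimately show "Orb \<in> {Orb \<in> col_orbits G \<Gamma> A valid.
            \<forall>\<phi>\<in>Orb. (\<Sum>c\<in>X. \<omega>X (\<phi> c)) = a \<and> (\<Sum>c\<in>Y. \<omega>Y (\<phi> c)) = b}" by blast
    qed
  next
    show "{Orb \<in> col_orbits G \<Gamma> A valid.
            \<forall>\<phi>\<in>Orb. (\<Sum>c\<in>X. \<omega>X (\<phi> c)) = a \<and> (\<Sum>c\<in>Y. \<omega>Y (\<phi> c)) = b} \<subseteq> orbits G (E a b) (\<psi> a b)"
    proof clarify
      fix Orb assume O: "Orb \<in> col_orbits G \<Gamma> A valid"
        and w: "\<forall>\<phi>\<in>Orb. (\<Sum>c\<in>X. \<omega>X (\<phi> c)) = a \<and> (\<Sum>c\<in>Y. \<omega>Y (\<phi> c)) = b"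
      obtain \<phi> where \<phi>: "\<phi> \<in> valid" and O2: "Orb = {act_col \<Gamma> A g \<phi> | g. g \<in> carrier G}"
        using O unfolding col_orbits_def by blast
      have "\<phi> = act_col \<Gamma> A \<one>\<^bsub>G\<^esub> \<phi>" using act_col_one[OF ga ext_valid[OF \<phi>]] by simp
      moreover have "\<one>\<^bsub>G\<^esub> \<in> carrier G" using grp by (simp add: group.is_monoid monoid.one_closed)
      ultimately have "\<phi> \<in> Orb" unfolding O2 by blast
      then have \<phi>E: "\<phi> \<in> E a b" using w \<phi> unfolding E_def by blast
      then show "Orb \<in> orbits G (E a b) (\<psi> a b)" unfolding orbits_def using orbit_eq[OF \<phi>E] O2 by blast
    qed
  qed
  have Nform: "N_orbits G \<Gamma> A X Y \<Omega>X \<Omega>Y \<omega>X \<omega>Y a b = card (orbits G (E a b) (\<psi> a b))" for a b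
    unfolding N_orbits_def orbits_eq valid_def ..
  have fixed_iff: "act_col \<Gamma> A g \<phi> = \<phi> \<longleftrightarrow> (\<forall>x\<in>A. \<phi> (\<Gamma> g x) = \<phi> x)" if "\<phi> \<in> valid" for g \<phi>
  proof
    assume "act_col \<Gamma> A g \<phi> = \<phi>"
    then show "\<forall>x\<in>A. \<phi> (\<Gamma> g x) = \<phi> x" unfolding act_col_def by (metis restrict_apply')
  next
    assume h: "\<forall>x\<in>A. \<phi> (\<Gamma> g x) = \<phi> x"
    show "act_col \<Gamma> A g \<phi> = \<phi>"
      by (rule extensionalityI[of _ A]) (use h ext_valid[OF that] in \<open>auto simp: act_col_def\<close>)
  qed
  have invariants_eq: "invariants (E a b) (\<psi> a b) g = {\<phi> \<in> E a b. act_col \<Gamma> A g \<phi> = \<phi>}"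
    if g: "g \<in> carrier G" for g a b
  proof -
    have "act_col \<Gamma> A (inv\<^bsub>G\<^esub> g) \<phi> = \<phi> \<longleftrightarrow> act_col \<Gamma> A g \<phi> = \<phi>" if \<phi>: "\<phi> \<in> valid" for \<phi>
      using act_inv_cancel[OF g \<phi>] act_inv_cancel2[OF g \<phi>] by metis
    then show ?thesis unfolding invariants_def \<psi>_def using Evalid by auto
  qed
  define FX where "FX = (\<lambda>g a. card (fixcol (\<Gamma> g) X \<Omega>X \<omega>X a))"
  define FY where "FY = (\<lambda>g b. card (fixcol (\<Gamma> g) Y \<Omega>Y \<omega>Y b))"
  have split: "card {\<phi> \<in> E a b. act_col \<Gamma> A g \<phi> = \<phi>} = FX g a * FY g b" if g: "g \<in> carrier G" for g a b
  proof -
    have GXm: "\<Gamma> g x \<in> X" if "x \<in> X" for x using GX[OF g] that by blast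
    have GYm: "\<Gamma> g x \<in> Y" if "x \<in> Y" for x using GY[OF g] that by blast
    have bij: "bij_betw (\<lambda>\<phi>. (restrict \<phi> X, restrict \<phi> Y)) {\<phi> \<in> E a b. act_col \<Gamma> A g \<phi> = \<phi>}
       (fixcol (\<Gamma> g) X \<Omega>X \<omega>X a \<times> fixcol (\<Gamma> g) Y \<Omega>Y \<omega>Y b)"
    proof (rule bij_betw_byWitness[where f' = "\<lambda>(u, v). (\<lambda>x. if x \<in> X then u x else v x)"])
      show "\<forall>\<phi>\<in>{\<phi> \<in> E a b. act_col \<Gamma> A g \<phi> = \<phi>}.
              (\<lambda>(u, v). (\<lambda>x. if x \<in> X then u x else v x)) (restrict \<phi> X, restrict \<phi> Y) = \<phi>"
      proof
        fix \<phi> assume "\<phi> \<in> {\<phi> \<in> E a b. act_col \<Gamma> A g \<phi> = \<phi>}"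
        then have "\<phi> \<in> extensional A" using Evalid ext_valid by blast
        then show "(\<lambda>(u, v). (\<lambda>x. if x \<in> X then u x else v x)) (restrict \<phi> X, restrict \<phi> Y) = \<phi>"
          using assms(4) by (auto simp: extensional_def)
      qed
      show "\<forall>uv\<in>fixcol (\<Gamma> g) X \<Omega>X \<omega>X a \<times> fixcol (\<Gamma> g) Y \<Omega>Y \<omega>Y b.
              (\<lambda>\<phi>. (restrict \<phi> X, restrict \<phi> Y)) ((\<lambda>(u, v). (\<lambda>x. if x \<in> X then u x else v x)) uv) = uv"
      proof
        fix uv assume "uv \<in> fixcol (\<Gamma> g) X \<Omega>X \<omega>X a \<times> fixcol (\<Gamma> g) Y \<Omega>Y \<omega>Y b"
        then obtain u v where uvd: "uv = (u, v)" and u: "u \<in> fixcol (\<Gamma> g) X \<Omega>X \<omega>X a" and v: "v \<in> fixcol (\<Gamma> g) Y \<Omega>Y \<omega>Y b"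
          by blast
        have ue: "u \<in> extensional X" and ve: "v \<in> extensional Y" using u v unfolding fixcol_def PiE_def by auto
        have 1: "restrict (\<lambda>x. if x \<in> X then u x else v x) X = u"
          using ue by (auto simp: extensional_def)
        have 2: "restrict (\<lambda>x. if x \<in> X then u x else v x) Y = v"
          using ve assms(5) by (intro ext) (auto simp: extensional_def)
        show "(\<lambda>\<phi>. (restrict \<phi> X, restrict \<phi> Y)) ((\<lambda>(u, v). (\<lambda>x. if x \<in> X then u x else v x)) uv) = uv"
          using 1 2 uvd by simp
      qed
      show "(\<lambda>\<phi>. (restrict \<phi> X, restrict \<phi> Y)) ` {\<phi> \<in> E a b. act_col \<Gamma> A g \<phi> = \<phi>}
         \<subseteq> fixcol (\<Gamma> g) X \<Omega>X \<omega>X a \<times> fixcol (\<Gamma> g) Y \<Omega>Y \<omega>Y b"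
      proof (rule image_subsetI)
        fix \<phi> assume "\<phi> \<in> {\<phi> \<in> E a b. act_col \<Gamma> A g \<phi> = \<phi>}"
        then have \<phi>: "\<phi> \<in> E a b" and fx: "act_col \<Gamma> A g \<phi> = \<phi>" by auto
        have v: "\<phi> \<in> valid" using \<phi> Evalid by blast
        have fix': "\<forall>x\<in>A. \<phi> (\<Gamma> g x) = \<phi> x" using fixed_iff[OF v] fx by blast
        have wa: "(\<Sum>c\<in>X. \<omega>X (\<phi> c)) = a" and wb: "(\<Sum>c\<in>Y. \<omega>Y (\<phi> c)) = b" using \<phi> unfolding E_def by auto
        have "restrict \<phi> X \<in> fixcol (\<Gamma> g) X \<Omega>X \<omega>X a"
          unfolding fixcol_def using v validI fix' GXm XA wa by auto
        moreover have "restrict \<phi> Y \<in> fixcol (\<Gamma> g) Y \<Omega>Y \<omega>Y b"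
          unfolding fixcol_def using v validI fix' GYm YA wb by auto
        ultimately show "(restrict \<phi> X, restrict \<phi> Y) \<in> fixcol (\<Gamma> g) X \<Omega>X \<omega>X a \<times> fixcol (\<Gamma> g) Y \<Omega>Y \<omega>Y b" by blast
      qed
      show "(\<lambda>(u, v). (\<lambda>x. if x \<in> X then u x else v x)) ` (fixcol (\<Gamma> g) X \<Omega>X \<omega>X a \<times> fixcol (\<Gamma> g) Y \<Omega>Y \<omega>Y b)
         \<subseteq> {\<phi> \<in> E a b. act_col \<Gamma> A g \<phi> = \<phi>}"
      proof
        fix \<phi>' assume "\<phi>' \<in> (\<lambda>(u, v). (\<lambda>x. if x \<in> X then u x else v x)) ` (fixcol (\<Gamma> g) X \<Omega>X \<omega>X a \<times> fixcol (\<Gamma> g) Y \<Omega>Y \<omega>Y b)"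
        then obtain u v where \<phi>'d: "\<phi>' = (\<lambda>x. if x \<in> X then u x else v x)" and u: "u \<in> fixcol (\<Gamma> g) X \<Omega>X \<omega>X a" and v: "v \<in> fixcol (\<Gamma> g) Y \<Omega>Y \<omega>Y b"
          by auto
        define \<phi> where "\<phi> = (\<lambda>x. if x \<in> X then u x else v x)"
        have ue: "u \<in> X \<rightarrow>\<^sub>E \<Omega>X" and ve: "v \<in> Y \<rightarrow>\<^sub>E \<Omega>Y" using u v unfolding fixcol_def by auto
        have uf: "\<forall>x\<in>X. u (\<Gamma> g x) = u x" and vf: "\<forall>x\<in>Y. v (\<Gamma> g x) = v x" using u v unfolding fixcol_def by auto
        have uw: "(\<Sum>c\<in>X. \<omega>X (u c)) = a" and vw: "(\<Sum>c\<in>Y. \<omega>Y (v c)) = b" using u v unfolding fixcol_def by auto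
        have pv: "\<phi> \<in> valid"
          unfolding validI
        proof (intro conjI ballI)
          show "\<phi> \<in> extensional A" using ve assms(4) unfolding \<phi>_def by (auto simp: PiE_def extensional_def)
          show "\<phi> c \<in> \<Omega>X" if "c \<in> X" for c using that ue unfolding \<phi>_def by auto
          show "\<phi> c \<in> \<Omega>Y" if "c \<in> Y" for c using that ve assms(5) unfolding \<phi>_def by auto
        qed
        have "(\<Sum>c\<in>X. \<omega>X (\<phi> c)) = a" using uw unfolding \<phi>_def by simp
        moreover have "(\<Sum>c\<in>Y. \<omega>Y (\<phi> c)) = b"
        proof -
          have "(\<Sum>c\<in>Y. \<omega>Y (\<phi> c)) = (\<Sum>c\<in>Y. \<omega>Y (v c))" unfolding \<phi>_def using assms(5) by (intro sum.cong) auto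
          then show ?thesis using vw by simp
        qed
        moreover have "\<forall>x\<in>A. \<phi> (\<Gamma> g x) = \<phi> x"
        proof
          fix x assume x: "x \<in> A"
          show "\<phi> (\<Gamma> g x) = \<phi> x"
          proof (cases "x \<in> X")
            case True then show ?thesis using GXm uf unfolding \<phi>_def by simp
          next
            case False
            then have "x \<in> Y" using x assms(4) by blast
            moreover have "\<Gamma> g x \<notin> X" using False partX[OF g x] by blast
            ultimately show ?thesis using GYm vf False unfolding \<phi>_def by simp
          qed
        qed
        ultimately have "\<phi> \<in> E a b \<and> act_col \<Gamma> A g \<phi> = \<phi>" using pv fixed_iff[OF pv] unfolding E_def by blast
        then show "\<phi>' \<in> {\<phi> \<in> E a b. act_col \<Gamma> A g \<phi> = \<phi>}"
          unfolding \<phi>'d \<phi>_def by blast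
      qed
    qed
    show ?thesis using bij_betw_same_card[OF bij] unfolding FX_def FY_def by (simp add: card_cartesian_product)
  qed
  have burn: "card (orbits G (E a b) (\<psi> a b)) * card (carrier G) = (\<Sum>g\<in>carrier G. FX g a * FY g b)" for a b
  proof -
    have "card (orbits G (E a b) (\<psi> a b)) * order G = (\<Sum>g\<in>carrier G. card (invariants (E a b) (\<psi> a b) g))"
      by (rule group_action.burnside[OF \<psi>ga Gfin Efin])
    also have "\<dots> = (\<Sum>g\<in>carrier G. FX g a * FY g b)"
      by (rule sum.cong[OF refl]) (simp add: invariants_eq split)
    finally show ?thesis unfolding order_def .
  qed
  have genX: "Abs_fps (\<lambda>a. of_nat (FX g a)) = (\<Prod>k\<in>{1..card A}. (gen_fun \<Omega>X \<omega>X oo fps_X ^ k) ^ cycles_in (\<Gamma> g) X k)"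
    if g: "g \<in> carrier G" for g
    unfolding FX_def gen_fun_def
    by (rule fix_gen[OF assms(3) Ginj[OF g] equalityD1[OF Gsurj[OF g]] XA equalityD1[OF GX[OF g]] assms(10)])
  have genY: "Abs_fps (\<lambda>b. of_nat (FY g b)) = (\<Prod>k\<in>{1..card A}. (Abs_fps (\<lambda>i. fps_const (of_nat (card {c \<in> \<Omega>Y. \<omega>Y c = i}))) oo fps_X ^ k) ^ cycles_in (\<Gamma> g) Y k :: rat fps fps)"
    if g: "g \<in> carrier G" for g
    unfolding FY_def fps_of_nat
    using fix_gen[where 'r = "rat fps", OF assms(3) Ginj[OF g] equalityD1[OF Gsurj[OF g]] YA equalityD1[OF GY[OF g]] assms(11)] by simp
  define r :: rat where "r = 1 / of_nat (card (carrier G))"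
  have "bip_cycle_index G \<Gamma> X Y (card A)
           (\<lambda>k. fps_const (gen_fun \<Omega>X \<omega>X oo fps_X ^ k))
           (\<lambda>k. Abs_fps (\<lambda>i. fps_const (of_nat (card {c \<in> \<Omega>Y. \<omega>Y c = i}))) oo fps_X ^ k)
     = fps_const (fps_const r) * (\<Sum>g\<in>carrier G. fps_const (Abs_fps (\<lambda>a. of_nat (FX g a))) * Abs_fps (\<lambda>b. of_nat (FY g b)))"
    unfolding bip_cycle_index_def r_def
    by (intro arg_cong2[where f = "(*)"] refl sum.cong)
       (simp add: genX genY prod.distrib fps_const_prod)
  also have "\<dots> = Abs_fps (\<lambda>b. Abs_fps (\<lambda>a. of_nat (N_orbits G \<Gamma> A X Y \<Omega>X \<Omega>Y \<omega>X \<omega>Y a b)))"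
  proof (rule fps_ext)
    fix b
    show "fps_nth (fps_const (fps_const r) * (\<Sum>g\<in>carrier G. fps_const (Abs_fps (\<lambda>a. of_nat (FX g a))) * Abs_fps (\<lambda>b. of_nat (FY g b)))) b
        = fps_nth (Abs_fps (\<lambda>b. Abs_fps (\<lambda>a. of_nat (N_orbits G \<Gamma> A X Y \<Omega>X \<Omega>Y \<omega>X \<omega>Y a b)))) b"
    proof (rule fps_ext)
      fix a
      have Gpos: "card (carrier G) > 0" using Gfin grp
        by (metis card_gt_0_iff empty_iff group.is_monoid monoid.one_closed)
      have "fps_nth (fps_nth (fps_const (fps_const r) * (\<Sum>g\<in>carrier G. fps_const (Abs_fps (\<lambda>a. of_nat (FX g a))) * Abs_fps (\<lambda>b. of_nat (FY g b)))) b) a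
          = r * (\<Sum>g\<in>carrier G. of_nat (FX g a * FY g b))"
        by (simp add: fps_sum_nth fps_of_nat[symmetric])
      also have "\<dots> = r * of_nat (card (orbits G (E a b) (\<psi> a b)) * card (carrier G))"
        by (simp only: burn of_nat_sum)
      also have "\<dots> = of_nat (card (orbits G (E a b) (\<psi> a b)))"
        unfolding r_def using Gpos by simp
      finally show "fps_nth (fps_nth (fps_const (fps_const r) * (\<Sum>g\<in>carrier G. fps_const (Abs_fps (\<lambda>a. of_nat (FX g a))) * Abs_fps (\<lambda>b. of_nat (FY g b)))) b) a
        = fps_nth (fps_nth (Abs_fps (\<lambda>b. Abs_fps (\<lambda>a. of_nat (N_orbits G \<Gamma> A X Y \<Omega>X \<Omega>Y \<omega>X \<omega>Y a b)))) b) a"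
        by (simp add: Nform)
    qed
  qed
  finally show ?thesis by simp
qed

end
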